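(* Let $R$ be any unital ring, let $\mathcal{F}$ be any Gabriel filter of right ideals of $R$, and let $\Delta=\{\delta_n\}_{n\in\omega}$ be any higher derivation on $R$. Then for every $I\in\mathcal{F}$ and every $n\in\omega$ there is $J\in\mathcal{F}$ with $\delta_i(J)\subseteq I$ for all $i\le n$. (That is, every Gabriel filter is higher differential; equivalently every hereditary torsion theory is higher differential.)
   Context: For a right ideal $I$ and $r\in R$, write $(r:I)=\{s\in R\mid rs\in I\}$. A Gabriel filter on $R$ is a nonempty collection $\mathcal{F}$ of right ideals of $R$ such that (1) if $I\in\mathcal{F}$ and $r\in R$ then $(r:I)\in\mathcal{F}$; (2) if $I\in\mathcal{F}$ and $J$ is a right ideal with $(r:J)\in\mathcal{F}$ for all $r\in I$, then $J\in\mathcal{F}$. Gabriel filters correspond bijectively to hereditary torsion theories on right $R$-modules. A higher derivation on $R$ is a family $\{\delta_n\}_{n\in\omega}$ of additive maps $R\to R$ with $\delta_0=\mathrm{id}_R$ and $\delta_n(rs)=\sum_{i=0}^n\delta_i(r)\delta_{n-i}(s)$ for all $n$ and all $r,s\in R$. *)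

theory Defs
  imports Main
begin

definition right_ideal :: "'a::ring_1 set \<Rightarrow> bool" where
  "right_ideal I \<longleftrightarrow> 0 \<in> I \<and> (\<forall>a\<in>I. \<forall>b\<in>I. a + b \<in> I) \<and> (\<forall>a\<in>I. - a \<in> I)
     \<and> (\<forall>a\<in>I. \<forall>r. a * r \<in> I)"

definition colon :: "'a::ring_1 \<Rightarrow> 'a set \<Rightarrow> 'a set" where
  "colon r I = {s. r * s \<in> I}"

definition gabriel_filter :: "'a::ring_1 set set \<Rightarrow> bool" where
  "gabriel_filter F \<longleftrightarrow> F \<noteq> {} \<and> (\<forall>I\<in>F. right_ideal I)
     \<and> (\<forall>I\<in>F. \<forall>r. colon r I \<in> F)
     \<and> (\<forall>I\<in>F. \<forall>J. right_ideal J \<and> (\<forall>r\<in>I. colon r J \<in> F) \<longrightarrow> J \<in> F)"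

definition higher_derivation :: "(nat \<Rightarrow> 'a::ring_1 \<Rightarrow> 'a) \<Rightarrow> bool" where
  "higher_derivation \<delta> \<longleftrightarrow> (\<forall>n x y. \<delta> n (x + y) = \<delta> n x + \<delta> n y)
     \<and> \<delta> 0 = id
     \<and> (\<forall>n r s. \<delta> n (r * s) = (\<Sum>i\<le>n. \<delta> i r * \<delta> (n - i) s))"

end

theory Submission
  imports Defs
begin

definition Jn :: "(nat \<Rightarrow> 'a::ring_1 \<Rightarrow> 'a) \<Rightarrow> nat \<Rightarrow> 'a set \<Rightarrow> 'a set" where
  "Jn \<delta> n I = {a. \<forall>i\<le>n. \<forall>t. \<delta> i (a * t) \<in> I}"

lemma hd_zero: assumes "higher_derivation \<delta>" shows "\<delta> n 0 = 0"
proof -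
  have "\<delta> n (0 + 0) = \<delta> n 0 + \<delta> n 0" using assms unfolding higher_derivation_def by blast
  thus ?thesis by simp
qed

lemma hd_neg: assumes "higher_derivation \<delta>" shows "\<delta> n (- x) = - \<delta> n x"
proof -
  have "\<delta> n (x + - x) = \<delta> n x + \<delta> n (- x)" using assms unfolding higher_derivation_def by blast
  thus ?thesis using hd_zero[OF assms] by (simp add: eq_neg_iff_add_eq_0 add.commute)
qed

lemma hd_add: assumes "higher_derivation \<delta>" shows "\<delta> n (x + y) = \<delta> n x + \<delta> n y"
  using assms unfolding higher_derivation_def by blast

lemma Jn_ri: assumes "higher_derivation \<delta>" "right_ideal I" shows "right_ideal (Jn \<delta> n I)"
  using assms(2) unfolding right_ideal_def Jn_def
  by (auto simp: hd_zero[OF assms(1)] hd_neg[OF assms(1)] hd_add[OF assms(1)] distrib_right mult.assoc)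

lemma colon_ri: assumes "right_ideal J" shows "right_ideal (colon r J)"
  using assms unfolding right_ideal_def colon_def
  by (auto simp: distrib_left mult.assoc[symmetric])

lemma gf_ne: "gabriel_filter F \<Longrightarrow> F \<noteq> {}" unfolding gabriel_filter_def by (elim conjE)
lemma gf_ri: "gabriel_filter F \<Longrightarrow> I \<in> F \<Longrightarrow> right_ideal I" unfolding gabriel_filter_def by (elim conjE) (erule bspec)
lemma gf_colon: "gabriel_filter F \<Longrightarrow> I \<in> F \<Longrightarrow> colon r I \<in> F" unfolding gabriel_filter_def by (elim conjE) (drule bspec, assumption, erule spec)
lemma gf_ax2: "gabriel_filter F \<Longrightarrow> I \<in> F \<Longrightarrow> right_ideal J \<Longrightarrow> (\<forall>r\<in>I. colon r J \<in> F) \<Longrightarrow> J \<in> F"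
  unfolding gabriel_filter_def by (elim conjE) (drule bspec, assumption, drule spec, erule mp, rule conjI)

lemma UNIV_in: assumes "gabriel_filter F" shows "UNIV \<in> F"
proof -
  from gf_ne[OF assms] obtain I0 where "I0 \<in> F" by blast
  hence "colon 0 I0 \<in> F" "right_ideal I0" using gf_colon[OF assms] gf_ri[OF assms] by auto
  moreover have "colon 0 I0 = UNIV" using \<open>right_ideal I0\<close> unfolding colon_def right_ideal_def by auto
  ultimately show ?thesis by simp
qed

lemma up_closed: assumes "gabriel_filter F" "I \<in> F" "I \<subseteq> J" "right_ideal J" shows "J \<in> F"
proof -
  have "\<forall>r\<in>I. colon r J \<in> F"
  proof
    fix r assume "r \<in> I"
    have ri: "right_ideal I" using gf_ri assms by blast
    have "colon r J = UNIV" using ri \<open>r\<in>I\<close> assms(3) unfolding colon_def right_ideal_def by auto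
    thus "colon r J \<in> F" using UNIV_in[OF assms(1)] by simp
  qed
  thus ?thesis using gf_ax2 assms by blast
qed

lemma int_closed: assumes "gabriel_filter F" "I \<in> F" "K \<in> F" shows "I \<inter> K \<in> F"
proof -
  have ri: "right_ideal I" "right_ideal K" using assms gf_ri by blast+
  hence rik: "right_ideal (I \<inter> K)" unfolding right_ideal_def by auto
  have "\<forall>r\<in>I. colon r (I \<inter> K) \<in> F"
  proof
    fix r assume "r \<in> I"
    have "colon r (I \<inter> K) = colon r K" using ri \<open>r\<in>I\<close> unfolding colon_def right_ideal_def by auto
    thus "colon r (I \<inter> K) \<in> F" using assms gf_colon by auto
  qed
  thus ?thesis using assms rik gf_ax2 by blast
qed

lemma fin_int: assumes "gabriel_filter F" "finite A" shows "(\<forall>k\<in>A. G k \<in> F) \<Longrightarrow> (\<Inter>k\<in>A. G k) \<in> F"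
  using assms(2)
proof (induction A rule: finite_induct)
  case empty thus ?case using UNIV_in[OF assms(1)] by simp
next
  case (insert x A) thus ?case using int_closed[OF assms(1)] by simp
qed

lemma ri_sum: assumes "right_ideal I" "finite A" shows "(\<forall>k\<in>A. f k \<in> I) \<Longrightarrow> sum f A \<in> I"
  using assms(2)
proof (induction A rule: finite_induct)
  case empty thus ?case using assms(1) unfolding right_ideal_def by simp
next
  case (insert x A) thus ?case using assms(1) unfolding right_ideal_def by simp
qed

lemma Jn_in: assumes "gabriel_filter F" "higher_derivation \<delta>" shows "I \<in> F \<Longrightarrow> Jn \<delta> n I \<in> F"
proof (induction n arbitrary: I)
  case 0
  have ri: "right_ideal I" using 0 assms gf_ri by blast
  have "Jn \<delta> 0 I = I"
  proof
    show "Jn \<delta> 0 I \<subseteq> I" unfolding Jn_def using assms(2) unfolding higher_derivation_def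
      by (auto dest: spec[where x=1])
    show "I \<subseteq> Jn \<delta> 0 I" unfolding Jn_def using assms(2) ri unfolding higher_derivation_def right_ideal_def
      by auto
  qed
  thus ?case using 0 by simp
next
  case (Suc n)
  have ri: "right_ideal I" using Suc assms gf_ri by blast
  have "\<forall>r\<in>I. colon r (Jn \<delta> (Suc n) I) \<in> F"
  proof
    fix r assume rI: "r \<in> I"
    define K where "K = (\<Inter>k\<in>{1..Suc n}. Jn \<delta> n (colon (\<delta> k r) I))"
    have KF: "K \<in> F" unfolding K_def
      by (rule fin_int[OF assms(1)]) (use Suc assms(1) gf_colon in \<open>auto\<close>)
    have "K \<subseteq> colon r (Jn \<delta> (Suc n) I)"
    proof
      fix s assume sK: "s \<in> K"
      have "\<forall>i\<le>Suc n. \<forall>t. \<delta> i (r * s * t) \<in> I"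
      proof (intro allI impI)
        fix i t assume i: "i \<le> Suc n"
        have eq: "\<delta> i (r * (s * t)) = (\<Sum>k\<le>i. \<delta> k r * \<delta> (i - k) (s * t))"
          using assms(2) unfolding higher_derivation_def by blast
        have "(\<Sum>k\<le>i. \<delta> k r * \<delta> (i - k) (s * t)) \<in> I"
        proof (rule ri_sum[OF ri], simp, intro ballI)
          fix k assume k: "k \<in> {..i}"
          show "\<delta> k r * \<delta> (i - k) (s * t) \<in> I"
          proof (cases "k = 0")
            case True
            thus ?thesis using rI ri assms(2) unfolding right_ideal_def higher_derivation_def by simp
          next
            case False
            hence "k \<in> {1..Suc n}" using k i by auto
            hence "s \<in> Jn \<delta> n (colon (\<delta> k r) I)" using sK unfolding K_def by blast
            moreover have "i - k \<le> n" using k i False by auto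
            ultimately show ?thesis unfolding Jn_def colon_def by auto
          qed
        qed
        thus "\<delta> i (r * s * t) \<in> I" using eq by (simp add: mult.assoc)
      qed
      thus "s \<in> colon r (Jn \<delta> (Suc n) I)" unfolding colon_def Jn_def by simp
    qed
    thus "colon r (Jn \<delta> (Suc n) I) \<in> F"
      using up_closed[OF assms(1) KF] colon_ri[OF Jn_ri[OF assms(2) ri]] by blast
  qed
  thus ?case using gf_ax2[OF assms(1) Suc.prems Jn_ri[OF assms(2) ri]] by blast
qed

theorem corollary3p2:
  fixes F :: "'a::ring_1 set set" and \<delta> :: "nat \<Rightarrow> 'a \<Rightarrow> 'a"
  assumes "gabriel_filter F" and "higher_derivation \<delta>"
  shows "\<forall>I\<in>F. \<forall>n. \<exists>J\<in>F. \<forall>i\<le>n. \<delta> i ` J \<subseteq> I"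
proof (intro ballI allI)
  fix I n assume "I \<in> F"
  hence "Jn \<delta> n I \<in> F" using Jn_in[OF assms] by blast
  moreover have "\<forall>i\<le>n. \<delta> i ` Jn \<delta> n I \<subseteq> I"
  proof (intro allI impI subsetI)
    fix i y assume "i \<le> n" "y \<in> \<delta> i ` Jn \<delta> n I"
    then obtain a where "a \<in> Jn \<delta> n I" "y = \<delta> i a" by blast
    hence "\<delta> i (a * 1) \<in> I" using \<open>i \<le> n\<close> unfolding Jn_def by blast
    thus "y \<in> I" using \<open>y = \<delta> i a\<close> by simp
  qed
  ultimately show "\<exists>J\<in>F. \<forall>i\<le>n. \<delta> i ` J \<subseteq> I" by blast
qed

end
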